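(* The problem of learning an unknown LPTS $U$ (up to strong simulation equivalence) is undecidable in the active learning framework with both the Friendly Teacher condition on the teacher and the minimum-state condition on the learner: there is no learner algorithm satisfying the minimum-state condition that, for every target LPTS $U$ and every teacher obeying the framework rules and the Friendly Teacher condition, after finitely many rounds conjectures a hypothesis $H$ with $H\simeq U$.
   Context: An LPTS is $\langle S,s^0,\alpha,\tau\rangle$ with finite state set $S$, start state $s^0$, finite action set $\alpha$, finite $\tau\subseteq S\times\alpha\times\mathrm{Dist}(S)$, where $\mathrm{Dist}(S)$ is the set of discrete probability distributions on $S$ (rational probabilities); write $s\xrightarrow{a}\mu$. A stochastic tree is an LPTS whose start state is in the support of no transition's distribution and every other state is in the support of exactly one transition's distribution. Strong simulation: for $R\subseteq S_1\times S_2$, $\mu_1\sqsubseteq_R\mu_2$ iff there is $w:S_1\times S_2\to\mathbb{Q}\cap[0,1]$ with $\sum_{s_2}w(s_1,s_2)=\mu_1(s_1)$, $\sum_{s_1}w(s_1,s_2)=\mu_2(s_2)$ and $w(s_1,s_2)>0\Rightarrow s_1Rs_2$; $R$ is a strong simulation iff $s_1Rs_2$ and $s_1\xrightarrow{a}\mu_1$ imply some $s_2\xrightarrow{a}\mu_2$ with $\mu_1\sqsubseteq_R\mu_2$; $L_1\preceq L_2$ iff a strong simulation relates the start states; $L_1\simeq L_2$ iff both $L_1\preceq L_2$ and $L_2\preceq L_1$. Active learning framework: unknown target LPTS $U$; in each round the learner conjectures a hypothesis $H$; the teacher checks $H\simeq U$ and, if it fails, returns either a negative counterexample (a tree $C$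 with $C\preceq H$, $C\not\preceq U$) or a positive one (a tree $C$ with $C\preceq U$, $C\not\preceq H$); letting $\mathcal{P}$, $\mathcal{N}$ be the sets of positive and negative counterexamples returned so far, there must always exist an LPTS consistent with them (an LPTS $L$ is consistent with $\mathcal{P},\mathcal{N}$ iff $P\preceq L$ for all $P\in\mathcal{P}$ and $N\not\preceq L$ for all $N\in\mathcal{N}$), and each conjecture must be consistent with the counterexamples received so far. An execution mapping from a tree $C$ to an LPTS $L$ is a total map $M:S_C\to S_L$ such that for every transition $c\xrightarrow{a}\mu_c$ of $C$ there is a transition $M(c)\xrightarrow{a}\mu$ of $L$ with $M$ injective on $\mathrm{supp}(\mu_c)$ and $\mu_c(c')=\mu(M(c'))$ for every $c'\in\mathrm{supp}(\mu_c)$. Friendly Teacher condition: every positive counterexample returned has an execution mapping to $U$, and every negative counterexample has an execution mapping to the current hypothesis $H$. Minimum-state condition on the learner: every hypothesis $H$ conjectured is an LPTS with the minimum number of states among all LPTSes consistent with the current $\mathcal{P}$ and $\mathcal{N}$. *)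

theory Defs
  imports Complex_Main
begin

text \<open>States are natural numbers,
actions have type 'a (instantiated with nat in the theorem, i.e. any countable
supply of action names).\<close>

record 'a lpts =
  states :: "nat set"
  start  :: nat
  acts   :: "'a set"
  trans  :: "(nat \<times> 'a \<times> (nat \<Rightarrow> rat)) set"

definition supp :: "(nat \<Rightarrow> rat) \<Rightarrow> nat set" where
  "supp \<mu> = {x. \<mu> x \<noteq> 0}"

definition is_dist :: "nat set \<Rightarrow> (nat \<Rightarrow> rat) \<Rightarrow> bool" where
  "is_dist S \<mu> \<longleftrightarrow> (\<forall>x. 0 \<le> \<mu> x) \<and> supp \<mu> \<subseteq> S \<and> sum \<mu> S = 1"

definition wf_lpts :: "'a lpts \<Rightarrow> bool" where
  "wf_lpts L \<longleftrightarrow> finite (states L) \<and> start L \<in> states L \<and> finite (acts L) \<and>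
     finite (trans L) \<and>
     (\<forall>(s, a, \<mu>) \<in> trans L. s \<in> states L \<and> a \<in> acts L \<and> is_dist (states L) \<mu>)"

definition lift_rel :: "nat set \<Rightarrow> nat set \<Rightarrow> (nat \<times> nat) set \<Rightarrow>
    (nat \<Rightarrow> rat) \<Rightarrow> (nat \<Rightarrow> rat) \<Rightarrow> bool" where
  "lift_rel S1 S2 R \<mu>1 \<mu>2 \<longleftrightarrow>
     (\<exists>w :: nat \<Rightarrow> nat \<Rightarrow> rat.
        (\<forall>x y. 0 \<le> w x y \<and> w x y \<le> 1) \<and>
        (\<forall>x\<in>S1. (\<Sum>y\<in>S2. w x y) = \<mu>1 x) \<and>
        (\<forall>y\<in>S2. (\<Sum>x\<in>S1. w x y) = \<mu>2 y) \<and>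
        (\<forall>x y. w x y > 0 \<longrightarrow> (x, y) \<in> R))"

definition strong_sim :: "'a lpts \<Rightarrow> 'a lpts \<Rightarrow> (nat \<times> nat) set \<Rightarrow> bool" where
  "strong_sim L1 L2 R \<longleftrightarrow> R \<subseteq> states L1 \<times> states L2 \<and>
     (\<forall>(s1, s2) \<in> R. \<forall>a \<mu>1. (s1, a, \<mu>1) \<in> trans L1 \<longrightarrow>
        (\<exists>\<mu>2. (s2, a, \<mu>2) \<in> trans L2 \<and> lift_rel (states L1) (states L2) R \<mu>1 \<mu>2))"

definition sim_preceq :: "'a lpts \<Rightarrow> 'a lpts \<Rightarrow> bool" (infix "\<preceq>\<^sub>s" 50) where
  "L1 \<preceq>\<^sub>s L2 \<longleftrightarrow> (\<exists>R. strong_sim L1 L2 R \<and> (start L1, start L2) \<in> R)"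

definition sim_equiv :: "'a lpts \<Rightarrow> 'a lpts \<Rightarrow> bool" (infix "\<simeq>\<^sub>s" 50) where
  "L1 \<simeq>\<^sub>s L2 \<longleftrightarrow> L1 \<preceq>\<^sub>s L2 \<and> L2 \<preceq>\<^sub>s L1"

definition stochastic_tree :: "'a lpts \<Rightarrow> bool" where
  "stochastic_tree C \<longleftrightarrow> wf_lpts C \<and>
     (\<forall>(s, a, \<mu>) \<in> trans C. start C \<notin> supp \<mu>) \<and>
     (\<forall>x \<in> states C - {start C}. \<exists>!t. t \<in> trans C \<and> x \<in> supp (snd (snd t)))"

definition exec_mapping :: "'a lpts \<Rightarrow> 'a lpts \<Rightarrow> (nat \<Rightarrow> nat) \<Rightarrow> bool" where
  "exec_mapping C L M \<longleftrightarrow> (\<forall>c \<in> states C. M c \<in> states L) \<and>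
     (\<forall>(c, a, \<mu>c) \<in> trans C. \<exists>\<mu>. (M c, a, \<mu>) \<in> trans L \<and> inj_on M (supp \<mu>c) \<and>
        (\<forall>c' \<in> supp \<mu>c. \<mu>c c' = \<mu> (M c')))"

text \<open>A history is the list of counterexamples returned so far; True = positive,
False = negative.\<close>
type_synonym 'a history = "(bool \<times> 'a lpts) list"

definition consistent :: "'a lpts \<Rightarrow> 'a history \<Rightarrow> bool" where
  "consistent L h \<longleftrightarrow> (\<forall>(pos, C) \<in> set h. if pos then C \<preceq>\<^sub>s L else \<not> C \<preceq>\<^sub>s L)"

text \<open>Minimum-state condition on a learner (a function from histories to hypotheses):
whenever some LPTS is consistent with the history (which the framework guarantees),
the conjecture is a consistent LPTS with the minimum number of states.\<close>
definition min_state_learner :: "('a history \<Rightarrow> 'a lpts) \<Rightarrow> bool" where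
  "min_state_learner learner \<longleftrightarrow>
     (\<forall>h. (\<exists>L. wf_lpts L \<and> consistent L h) \<longrightarrow>
        wf_lpts (learner h) \<and> consistent (learner h) h \<and>
        (\<forall>L. wf_lpts L \<and> consistent L h \<longrightarrow> card (states (learner h)) \<le> card (states L)))"

fun hist :: "('a history \<Rightarrow> 'a lpts) \<Rightarrow> ('a history \<Rightarrow> 'a lpts \<Rightarrow> bool \<times> 'a lpts)
              \<Rightarrow> nat \<Rightarrow> 'a history" where
  "hist learner teacher 0 = []"
| "hist learner teacher (Suc n) =
     hist learner teacher n @ [teacher (hist learner teacher n) (learner (hist learner teacher n))]"

text \<open>Validity of a teacher's answer (framework rules plus Friendly Teacher condition).\<close>
definition valid_answer :: "'a lpts \<Rightarrow> 'a lpts \<Rightarrow> 'a history \<Rightarrow> bool \<times> 'a lpts \<Rightarrow> bool" where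
  "valid_answer U H h ans \<longleftrightarrow>
     (case ans of (pos, C) \<Rightarrow>
        stochastic_tree C \<and>
        (if pos then C \<preceq>\<^sub>s U \<and> \<not> C \<preceq>\<^sub>s H \<and> (\<exists>M. exec_mapping C U M)
         else C \<preceq>\<^sub>s H \<and> \<not> C \<preceq>\<^sub>s U \<and> (\<exists>M. exec_mapping C H M))) \<and>
     (\<exists>L. wf_lpts L \<and> consistent L (h @ [ans]))"

definition friendly_teacher :: "'a lpts \<Rightarrow> ('a history \<Rightarrow> 'a lpts)
     \<Rightarrow> ('a history \<Rightarrow> 'a lpts \<Rightarrow> bool \<times> 'a lpts) \<Rightarrow> bool" where
  "friendly_teacher U learner teacher \<longleftrightarrow>
     (\<forall>n. (\<forall>m\<le>n. \<not> learner (hist learner teacher m) \<simeq>\<^sub>s U) \<longrightarrow>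
        valid_answer U (learner (hist learner teacher n)) (hist learner teacher n)
          (teacher (hist learner teacher n) (learner (hist learner teacher n))))"

end

theory Submission
  imports Defs
begin


definition dirac :: "nat \<Rightarrow> nat \<Rightarrow> rat" where "dirac k = (\<lambda>n. if n = k then 1 else 0)"
definition muA :: "nat \<Rightarrow> rat" where "muA = (\<lambda>n. if n = 1 \<or> n = 2 then 1/2 else 0)"
definition Ut :: "nat lpts" where
  "Ut = \<lparr>states = {0,1,2,3}, start = 0, acts = {0,1}, trans = {(0,0,muA),(1,1,dirac 3)}\<rparr>"
definition fq :: "rat \<Rightarrow> nat \<Rightarrow> rat" where
  "fq q = (\<lambda>n. if n = 0 then 1 - q else if n = 1 then q else 0)"
definition Fq :: "rat \<Rightarrow> nat lpts" where
  "Fq q = \<lparr>states = {0,1}, start = 0, acts = {0,1}, trans = {(0,0,fq q),(1,1,dirac 1)}\<rparr>"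

lemma supp_dirac[simp]: "supp (dirac k) = {k}"
  by (auto simp: supp_def dirac_def)

lemma wf_Ut: "wf_lpts Ut"
  by (auto simp: wf_lpts_def Ut_def is_dist_def supp_def muA_def dirac_def)

lemma wf_Fq: "0 \<le> q \<Longrightarrow> q \<le> 1 \<Longrightarrow> wf_lpts (Fq q)"
  by (auto simp: wf_lpts_def Fq_def is_dist_def supp_def fq_def dirac_def)

lemma card_Fq: "card (states (Fq q)) = 2"
  by (simp add: Fq_def)

lemma tree_Ut: "stochastic_tree Ut"
  unfolding stochastic_tree_def using wf_Ut
  by (auto simp: Ut_def supp_def muA_def dirac_def)



lemma dist_nonneg: "is_dist S \<mu> \<Longrightarrow> 0 \<le> \<mu> x"
  by (simp add: is_dist_def)

lemma dist_out: "is_dist S \<mu> \<Longrightarrow> x \<notin> S \<Longrightarrow> \<mu> x = 0"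
  by (auto simp: is_dist_def supp_def)

lemma dist_le1: assumes "is_dist S \<mu>" "finite S" shows "\<mu> x \<le> 1"
proof (cases "x \<in> S")
  case True
  have "\<mu> x \<le> sum \<mu> S" using assms True by (intro member_le_sum) (auto simp: is_dist_def)
  thus ?thesis using assms by (simp add: is_dist_def)
next
  case False thus ?thesis using dist_out[OF assms(1)] by simp
qed

lemma sum_supp_eq: assumes "is_dist S \<mu>" "finite S" "supp \<mu> \<subseteq> T" "T \<subseteq> S"
  shows "sum \<mu> T = 1"
proof -
  have "sum \<mu> T = sum \<mu> S"
    by (rule sum.mono_neutral_left) (use assms in \<open>auto simp: supp_def\<close>)
  thus ?thesis using assms by (simp add: is_dist_def)
qed

lemma exec_sim:
  assumes wfC: "wf_lpts C" and wfL: "wf_lpts L" and ex: "exec_mapping C L M"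
    and st: "M (start C) = start L"
  shows "C \<preceq>\<^sub>s L"
proof -
  define R where "R = {(c, M c) | c. c \<in> states C}"
  have finC: "finite (states C)" and finL: "finite (states L)" using wfC wfL by (auto simp: wf_lpts_def)
  have Rsub: "R \<subseteq> states C \<times> states L" using ex by (auto simp: R_def exec_mapping_def)
  have step: "\<exists>\<mu>2. (s2, a, \<mu>2) \<in> trans L \<and> lift_rel (states C) (states L) R \<mu>1 \<mu>2"
    if hR: "(s1, s2) \<in> R" and ht: "(s1, a, \<mu>1) \<in> trans C" for s1 s2 a \<mu>1
  proof -
    have s2: "s2 = M s1" using hR by (auto simp: R_def)
    obtain \<mu> where mu: "(M s1, a, \<mu>) \<in> trans L" "inj_on M (supp \<mu>1)"
      "\<forall>c'\<in>supp \<mu>1. \<mu>1 c' = \<mu> (M c')"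
      using ex ht unfolding exec_mapping_def by fastforce
    have d1: "is_dist (states C) \<mu>1" using wfC ht by (auto simp: wf_lpts_def)
    have d2: "is_dist (states L) \<mu>" using wfL mu(1) by (auto simp: wf_lpts_def)
    have suppC: "supp \<mu>1 \<subseteq> states C" using d1 by (simp add: is_dist_def)
    define w where "w = (\<lambda>u v. if u \<in> supp \<mu>1 \<and> v = M u then \<mu>1 u else 0)"
    have w1: "\<forall>x y. 0 \<le> w x y \<and> w x y \<le> 1"
      using dist_nonneg[OF d1] dist_le1[OF d1 finC] by (auto simp: w_def)
    have w2: "\<forall>x\<in>states C. (\<Sum>y\<in>states L. w x y) = \<mu>1 x"
    proof
      fix x assume x: "x \<in> states C"
      have Mx: "M x \<in> states L" using ex x by (auto simp: exec_mapping_def)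
      have "(\<Sum>y\<in>states L. w x y) = (\<Sum>y\<in>states L. if y = M x then (if x \<in> supp \<mu>1 then \<mu>1 x else 0) else 0)"
        by (rule sum.cong) (auto simp: w_def)
      also have "\<dots> = (if x \<in> supp \<mu>1 then \<mu>1 x else 0)" using finL Mx by simp
      also have "\<dots> = \<mu>1 x" by (auto simp: supp_def)
      finally show "(\<Sum>y\<in>states L. w x y) = \<mu>1 x" .
    qed
    have imgsum: "sum \<mu> (M ` supp \<mu>1) = 1"
    proof -
      have "sum \<mu> (M ` supp \<mu>1) = sum (\<mu> \<circ> M) (supp \<mu>1)" using mu(2) by (rule sum.reindex)
      also have "\<dots> = sum \<mu>1 (supp \<mu>1)" using mu(3) by (auto intro: sum.cong)
      also have "\<dots> = 1" using sum_supp_eq[OF d1 finC _ suppC] by simp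
      finally show ?thesis .
    qed
    have imgsub: "M ` supp \<mu>1 \<subseteq> states L" using ex suppC by (auto simp: exec_mapping_def)
    have zero: "\<mu> v = 0" if "v \<in> states L" "v \<notin> M ` supp \<mu>1" for v
    proof -
      have "sum \<mu> (states L) = sum \<mu> (M ` supp \<mu>1) + sum \<mu> (states L - M ` supp \<mu>1)"
        using finL imgsub by (metis add.commute sum.subset_diff)
      hence "sum \<mu> (states L - M ` supp \<mu>1) = 0" using imgsum d2 by (simp add: is_dist_def)
      hence "\<forall>v\<in>states L - M ` supp \<mu>1. \<mu> v = 0"
        using finL dist_nonneg[OF d2] by (subst (asm) sum_nonneg_eq_0_iff) auto
      thus ?thesis using that by auto
    qed
    have w3: "\<forall>y\<in>states L. (\<Sum>x\<in>states C. w x y) = \<mu> y"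
    proof
      fix y assume y: "y \<in> states L"
      show "(\<Sum>x\<in>states C. w x y) = \<mu> y"
      proof (cases "y \<in> M ` supp \<mu>1")
        case True
        then obtain u0 where u0: "u0 \<in> supp \<mu>1" "y = M u0" by auto
        have "(\<Sum>x\<in>states C. w x y) = (\<Sum>x\<in>states C. if x = u0 then \<mu>1 u0 else 0)"
          apply (rule sum.cong, simp)
          using u0 mu(2) by (auto simp: w_def inj_on_def)
        also have "\<dots> = \<mu>1 u0" using u0 suppC finC by auto
        finally show ?thesis using u0 mu(3) by simp
      next
        case False
        have "(\<Sum>x\<in>states C. w x y) = 0"
          by (rule sum.neutral) (use False in \<open>auto simp: w_def\<close>)
        thus ?thesis using zero[OF y False] by simp
      qed
    qed
    have w4: "\<forall>x y. w x y > 0 \<longrightarrow> (x, y) \<in> R"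
      using suppC by (auto simp: w_def R_def split: if_splits)
    show ?thesis using mu(1) w1 w2 w3 w4 s2 unfolding lift_rel_def by blast
  qed
  have "strong_sim C L R" unfolding strong_sim_def using Rsub step by blast
  moreover have "(start C, start L) \<in> R" using wfC st by (auto simp: R_def wf_lpts_def)
  ultimately show ?thesis unfolding sim_preceq_def by blast
qed



lemma Ut_trans: "(s, a, \<mu>) \<in> trans Ut \<longleftrightarrow> (s = 0 \<and> a = 0 \<and> \<mu> = muA) \<or> (s = 1 \<and> a = 1 \<and> \<mu> = dirac 3)"
  by (auto simp: Ut_def)

lemma Fq_trans: "(s, a, \<mu>) \<in> trans (Fq q) \<longleftrightarrow> (s = 0 \<and> a = 0 \<and> \<mu> = fq q) \<or> (s = 1 \<and> a = 1 \<and> \<mu> = dirac 1)"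
  by (auto simp: Fq_def)

lemma Ut_simps[simp]: "states Ut = {0,1,2,3}" "start Ut = 0"
  by (auto simp: Ut_def)
lemma Fq_simps[simp]: "states (Fq q) = {0,1}" "start (Fq q) = 0"
  by (auto simp: Fq_def)

lemma U_le_F:
  assumes q: "1/2 \<le> q" "q \<le> 1"
  shows "Ut \<preceq>\<^sub>s Fq q"
proof -
  define R :: "(nat \<times> nat) set" where "R = {(0,0),(1,1),(2,0),(2,1),(3,0),(3,1)}"
  have l1: "lift_rel {0,1,2,3} {0,1} R muA (fq q)"
    unfolding lift_rel_def
    apply (rule exI[of _ "\<lambda>u v. if u=1 \<and> v=1 then 1/2 else if u=2 \<and> v=1 then q-1/2 else if u=2 \<and> v=0 then 1-q else 0"])
    using q by (auto simp: muA_def fq_def R_def split: if_splits)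
  have l2: "lift_rel {0,1,2,3} {0,1} R (dirac 3) (dirac 1)"
    unfolding lift_rel_def
    apply (rule exI[of _ "\<lambda>u v. if u=3 \<and> v=1 then 1 else 0"])
    by (auto simp: dirac_def R_def)
  have "strong_sim Ut (Fq q) R"
    unfolding strong_sim_def using l1 l2 by (auto simp: R_def Ut_trans Fq_trans)
  thus ?thesis unfolding sim_preceq_def by (auto simp: R_def)
qed



lemma pos_term: "finite S \<Longrightarrow> sum f S > (0::rat) \<Longrightarrow> \<exists>x\<in>S. f x > 0"
  using sum_nonpos[of S f] by (meson not_less)

lemma le_sum: "finite S \<Longrightarrow> \<forall>x. 0 \<le> f x \<Longrightarrow> x \<in> S \<Longrightarrow> f x \<le> sum (f::_\<Rightarrow>rat) S"
  by (rule member_le_sum) auto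

lemma sim_step: "strong_sim L1 L2 R \<Longrightarrow> (s1, s2) \<in> R \<Longrightarrow> (s1, a, \<mu>1) \<in> trans L1 \<Longrightarrow>
   \<exists>\<mu>2. (s2, a, \<mu>2) \<in> trans L2 \<and> lift_rel (states L1) (states L2) R \<mu>1 \<mu>2"
proof -
  assume a: "strong_sim L1 L2 R" "(s1, s2) \<in> R" "(s1, a, \<mu>1) \<in> trans L1"
  have "\<forall>(s1, s2) \<in> R. \<forall>a \<mu>1. (s1, a, \<mu>1) \<in> trans L1 \<longrightarrow>
        (\<exists>\<mu>2. (s2, a, \<mu>2) \<in> trans L2 \<and> lift_rel (states L1) (states L2) R \<mu>1 \<mu>2)"
    using a(1) unfolding strong_sim_def by (rule conjunct2)
  from bspec[OF this a(2)] a(3) show ?thesis by simp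
qed

lemma sim_act: "strong_sim L1 L2 R \<Longrightarrow> (s1, s2) \<in> R \<Longrightarrow> (s1, a, \<mu>1) \<in> trans L1 \<Longrightarrow>
   \<exists>\<mu>2. (s2, a, \<mu>2) \<in> trans L2"
proof -
  assume a: "strong_sim L1 L2 R" "(s1, s2) \<in> R" "(s1, a, \<mu>1) \<in> trans L1"
  from sim_step[OF a] obtain \<mu>2 where "(s2, a, \<mu>2) \<in> trans L2" by blast
  thus ?thesis by blast
qed

lemma lift_relE: assumes "lift_rel S1 S2 R \<mu>1 \<mu>2"
  obtains w where "\<forall>x y. 0 \<le> w x y \<and> w x y \<le> 1"
   "\<forall>x\<in>S1. (\<Sum>y\<in>S2. w x y) = \<mu>1 x" "\<forall>y\<in>S2. (\<Sum>x\<in>S1. w x y) = \<mu>2 y"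
   "\<forall>x y. w x y > 0 \<longrightarrow> (x, y) \<in> R"
  using assms unfolding lift_rel_def by (metis that)

lemma no_small:
  assumes wf: "wf_lpts L" and le1: "L \<preceq>\<^sub>s Ut" and le2: "Ut \<preceq>\<^sub>s L"
  shows "3 \<le> card (states L)"
proof -
  define x where "x = start L"
  have fin: "finite (states L)" and xin: "x \<in> states L" using wf by (auto simp: wf_lpts_def x_def)
  obtain R1 where R1: "strong_sim Ut L R1" "(0, x) \<in> R1" using le2 by (auto simp: sim_preceq_def x_def)
  have "(0, 0, muA) \<in> trans Ut" by (simp add: Ut_trans)
  from sim_step[OF R1 this] obtain \<mu>0 where m0: "(x, 0, \<mu>0) \<in> trans L" "lift_rel {0,1,2,3} (states L) R1 muA \<mu>0"
    by auto
  obtain w1 where w1: "\<forall>x y. 0 \<le> w1 x y \<and> w1 x y \<le> 1"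
      "\<forall>x\<in>{0,1,2,3}. (\<Sum>y\<in>states L. w1 x y) = muA x"
      "\<forall>y\<in>states L. (\<Sum>x\<in>{0,1,2,3}. w1 x y) = \<mu>0 y"
      "\<forall>x y. w1 x y > 0 \<longrightarrow> (x, y) \<in> R1"
    using m0(2) by (rule lift_relE)
  have "(\<Sum>y\<in>states L. w1 1 y) = 1/2" using w1(2) by (simp add: muA_def)
  then obtain z1 where z1: "z1 \<in> states L" "w1 1 z1 > 0" using pos_term[OF fin, of "w1 1"] by auto
  have "(1, z1) \<in> R1" using z1 w1(4) by blast
  moreover have "(1, 1, dirac 3) \<in> trans Ut" by (simp add: Ut_trans)
  ultimately obtain \<nu> where nu: "(z1, 1, \<nu>) \<in> trans L"
    using sim_act[OF R1(1)] by blast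
  have "w1 1 z1 \<le> (\<Sum>x\<in>{0,1,2,3}. w1 x z1)"
    by (rule le_sum) (use w1(1) in auto)
  hence mz1: "\<mu>0 z1 > 0" using w1(3) z1 by auto
  obtain R2 where R2: "strong_sim L Ut R2" "(x, 0) \<in> R2" using le1 by (auto simp: sim_preceq_def x_def)
  from sim_step[OF R2 m0(1)] obtain \<mu> where "(0, 0, \<mu>) \<in> trans Ut" "lift_rel (states L) {0,1,2,3} R2 \<mu>0 \<mu>"
    by auto
  hence "lift_rel (states L) {0,1,2,3} R2 \<mu>0 muA" by (simp add: Ut_trans)
  then obtain w2 where w2: "\<forall>x y. 0 \<le> w2 x y \<and> w2 x y \<le> 1"
      "\<forall>x\<in>states L. (\<Sum>y\<in>{0,1,2,3}. w2 x y) = \<mu>0 x"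
      "\<forall>y\<in>{0,1,2,3}. (\<Sum>x\<in>states L. w2 x y) = muA y"
      "\<forall>x y. w2 x y > 0 \<longrightarrow> (x, y) \<in> R2"
    by (rule lift_relE)
  have "(\<Sum>x\<in>states L. w2 x 2) = 1/2" using w2(3) by (simp add: muA_def)
  then obtain z0 where z0: "z0 \<in> states L" "w2 z0 2 > 0" using pos_term[OF fin, of "\<lambda>z. w2 z 2"] by auto
  have z02: "(z0, 2) \<in> R2" using z0 w2(4) by blast
  have z0dead: "(z0, a, \<nu>') \<notin> trans L" for a \<nu>'
  proof
    assume "(z0, a, \<nu>') \<in> trans L"
    from sim_act[OF R2(1) z02 this] show False by (auto simp: Ut_trans)
  qed
  have "(\<Sum>y\<in>{0,1,2,3}. w2 z1 y) > 0" using w2(2) z1(1) mz1 by simp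
  then obtain y where y: "y \<in> {0,1,2,3}" "w2 z1 y > 0" using pos_term[of "{0,1,2,3::nat}" "w2 z1"] by blast
  have zy: "(z1, y) \<in> R2" using y w2(4) by blast
  have y1: "y = 1" using sim_act[OF R2(1) zy nu] by (auto simp: Ut_trans)
  have xz1: "x \<noteq> z1"
  proof
    assume "x = z1"
    hence "y = 0" using sim_act[OF R2(1) zy] m0(1) by (auto simp: Ut_trans)
    thus False using y1 by simp
  qed
  have "z0 \<noteq> x" using z0dead m0(1) by blast
  moreover have "z0 \<noteq> z1" using z0dead nu by blast
  ultimately have "card {x, z0, z1} = 3" using xz1 by auto
  moreover have "{x, z0, z1} \<subseteq> states L" using xin z0 z1 by auto
  ultimately show ?thesis using fin by (metis card_mono)
qed



lemma stoch_intro: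
  assumes "wf_lpts C" "\<forall>(s,a,\<mu>)\<in>trans C. start C \<notin> supp \<mu>"
    "\<forall>x\<in>states C - {start C}. \<exists>t\<in>trans C. x \<in> supp (snd (snd t))"
    "\<forall>x t1 t2. t1 \<in> trans C \<longrightarrow> t2 \<in> trans C \<longrightarrow> x \<in> supp (snd (snd t1)) \<longrightarrow> x \<in> supp (snd (snd t2)) \<longrightarrow> t1 = t2"
  shows "stochastic_tree C"
  unfolding stochastic_tree_def using assms by metis

lemma is_dist_I:
  assumes "finite S" "\<forall>x. 0 \<le> \<mu> x" "supp \<mu> \<subseteq> S" "supp \<mu> \<subseteq> T" "finite T" "sum \<mu> T = 1"
  shows "is_dist S \<mu>"
proof -
  have "sum \<mu> S = sum \<mu> (supp \<mu>)"
    by (rule sum.mono_neutral_right) (use assms in \<open>auto simp: supp_def\<close>)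
  also have "\<dots> = sum \<mu> T"
    by (rule sum.mono_neutral_left) (use assms in \<open>auto simp: supp_def\<close>)
  finally show ?thesis using assms by (simp add: is_dist_def)
qed

definition shiftD :: "(nat \<Rightarrow> rat) \<Rightarrow> nat \<Rightarrow> rat" where
  "shiftD \<nu> n = (if n = 0 then 0 else \<nu> (n - 1))"
definition N1 :: "nat \<Rightarrow> (nat \<Rightarrow> rat) \<Rightarrow> nat lpts" where
  "N1 c \<nu> = \<lparr>states = insert 0 (supp (shiftD \<nu>)), start = 0, acts = {c}, trans = {(0, c, shiftD \<nu>)}\<rparr>"

lemma supp_shiftD: "supp (shiftD \<nu>) = Suc ` supp \<nu>"
  by (auto simp: supp_def shiftD_def image_iff intro!: exI[of _ "_ - 1"])

lemma N1_simps[simp]: "states (N1 c \<nu>) = insert 0 (Suc ` supp \<nu>)" "start (N1 c \<nu>) = 0"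
  "trans (N1 c \<nu>) = {(0, c, shiftD \<nu>)}" "acts (N1 c \<nu>) = {c}"
  by (auto simp: N1_def supp_shiftD)

lemma N1_props:
  assumes wf: "wf_lpts H" and t: "(start H, c, \<nu>) \<in> trans H"
  shows "stochastic_tree (N1 c \<nu>)" "exec_mapping (N1 c \<nu>) H (\<lambda>n. if n = 0 then start H else n - 1)"
proof -
  have d: "is_dist (states H) \<nu>" and fin: "finite (states H)" and st: "start H \<in> states H"
    using wf t by (auto simp: wf_lpts_def)
  have sub: "supp \<nu> \<subseteq> states H" using d by (simp add: is_dist_def)
  have finS: "finite (supp \<nu>)" using sub fin by (rule finite_subset)
  have sum1: "sum \<nu> (supp \<nu>) = 1" using sum_supp_eq[OF d fin _ sub] by simp
  have "sum (shiftD \<nu>) (Suc ` supp \<nu>) = sum (shiftD \<nu> \<circ> Suc) (supp \<nu>)"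
    by (rule sum.reindex) simp
  also have "\<dots> = 1" using sum1 by (simp add: shiftD_def o_def)
  finally have s1: "sum (shiftD \<nu>) (Suc ` supp \<nu>) = 1" .
  have dist: "is_dist (insert 0 (Suc ` supp \<nu>)) (shiftD \<nu>)"
    by (rule is_dist_I[OF _ _ _ _ _ s1]) (use finS dist_nonneg[OF d] in \<open>auto simp: supp_shiftD shiftD_def\<close>)
  have wfN: "wf_lpts (N1 c \<nu>)" unfolding wf_lpts_def using finS dist by simp
  show "stochastic_tree (N1 c \<nu>)"
    by (rule stoch_intro[OF wfN]) (auto simp: supp_shiftD)
  show "exec_mapping (N1 c \<nu>) H (\<lambda>n. if n = 0 then start H else n - 1)"
    unfolding exec_mapping_def using st sub t
    by (auto simp: supp_shiftD shiftD_def inj_on_def)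
qed

lemma N1_not_le_U: "c \<noteq> 0 \<Longrightarrow> \<not> N1 c \<nu> \<preceq>\<^sub>s Ut"
proof
  assume c: "c \<noteq> 0" and "N1 c \<nu> \<preceq>\<^sub>s Ut"
  then obtain R where R: "strong_sim (N1 c \<nu>) Ut R" "(0, 0) \<in> R" by (auto simp: sim_preceq_def)
  have "(0, c, shiftD \<nu>) \<in> trans (N1 c \<nu>)" by simp
  from sim_act[OF R this] c show False by (auto simp: Ut_trans)
qed

lemma N1_not_le_F: "c \<noteq> 0 \<Longrightarrow> \<not> N1 c \<nu> \<preceq>\<^sub>s Fq q"
proof
  assume c: "c \<noteq> 0" and "N1 c \<nu> \<preceq>\<^sub>s Fq q"
  then obtain R where R: "strong_sim (N1 c \<nu>) (Fq q) R" "(0, 0) \<in> R" by (auto simp: sim_preceq_def)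
  have "(0, c, shiftD \<nu>) \<in> trans (N1 c \<nu>)" by simp
  from sim_act[OF R this] c show False by (auto simp: Fq_trans)
qed



definition D0 :: "rat \<Rightarrow> rat \<Rightarrow> nat \<Rightarrow> rat" where
  "D0 p r = (\<lambda>n. if n = 1 then p else if n = 2 then r else 0)"
definition D1 :: "rat \<Rightarrow> rat \<Rightarrow> nat \<Rightarrow> rat" where
  "D1 p r = (\<lambda>n. if n = 3 then p else if n = 4 then r else 0)"
definition D2 :: "rat \<Rightarrow> rat \<Rightarrow> nat \<Rightarrow> rat" where
  "D2 s t = (\<lambda>n. if n = 5 then s else if n = 6 then t else 0)"

definition N2 :: "rat \<Rightarrow> rat \<Rightarrow> rat \<Rightarrow> rat \<Rightarrow> nat lpts" where
  "N2 p r s t = \<lparr>states = {0} \<union> supp (D0 p r) \<union> (if p \<noteq> 0 then supp (D1 p r) else {})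
      \<union> (if r \<noteq> 0 then supp (D2 s t) else {}),
    start = 0, acts = {0,1},
    trans = {(0,0,D0 p r)} \<union> (if p \<noteq> 0 then {(1,0,D1 p r)} else {}) \<union> (if r \<noteq> 0 then {(2,1,D2 s t)} else {})\<rparr>"

lemma supp_D0: "supp (D0 p r) = (if p \<noteq> 0 then {1} else {}) \<union> (if r \<noteq> 0 then {2} else {})"
  by (auto simp: supp_def D0_def)
lemma supp_D1: "supp (D1 p r) = (if p \<noteq> 0 then {3} else {}) \<union> (if r \<noteq> 0 then {4} else {})"
  by (auto simp: supp_def D1_def)
lemma supp_D2: "supp (D2 s t) = (if s \<noteq> 0 then {5} else {}) \<union> (if t \<noteq> 0 then {6} else {})"
  by (auto simp: supp_def D2_def)

lemma N2_simps[simp]: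
  "start (N2 p r s t) = 0" "acts (N2 p r s t) = {0,1}"
  "states (N2 p r s t) = {0} \<union> supp (D0 p r) \<union> (if p \<noteq> 0 then supp (D1 p r) else {})
      \<union> (if r \<noteq> 0 then supp (D2 s t) else {})"
  by (simp_all add: N2_def)

lemma N2_tr: "trans (N2 p r s t) = {(0,0,D0 p r)} \<union> (if p \<noteq> 0 then {(1,0,D1 p r)} else {}) \<union> (if r \<noteq> 0 then {(2,1,D2 s t)} else {})"
  by (simp add: N2_def)

lemma N2_trans: "(u, a, \<mu>) \<in> trans (N2 p r s t) \<longleftrightarrow>
   (u = 0 \<and> a = 0 \<and> \<mu> = D0 p r) \<or> (p \<noteq> 0 \<and> u = 1 \<and> a = 0 \<and> \<mu> = D1 p r) \<or> (r \<noteq> 0 \<and> u = 2 \<and> a = 1 \<and> \<mu> = D2 s t)"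
  by (auto simp: N2_def)

lemma N2_tree:
  assumes "0 \<le> p" "0 \<le> r" "0 \<le> s" "0 \<le> t" "p + r = 1" "s + t = 1"
  shows "stochastic_tree (N2 p r s t)"
proof -
  have fin: "finite (states (N2 p r s t))" by (simp add: supp_D0 supp_D1 supp_D2)
  have n0: "\<forall>x. 0 \<le> D0 p r x" "\<forall>x. 0 \<le> D1 p r x" "\<forall>x. 0 \<le> D2 s t x"
    using assms by (auto simp: D0_def D1_def D2_def)
  have i0: "is_dist (states (N2 p r s t)) (D0 p r)"
    by (rule is_dist_I[OF fin n0(1), where T="{1,2}"]) (use assms in \<open>auto simp: supp_def D0_def\<close>)
  have i1: "p \<noteq> 0 \<Longrightarrow> is_dist (states (N2 p r s t)) (D1 p r)"
    by (rule is_dist_I[OF fin n0(2), where T="{3,4}"]) (use assms in \<open>auto simp: supp_def D1_def\<close>)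
  have i2: "r \<noteq> 0 \<Longrightarrow> is_dist (states (N2 p r s t)) (D2 s t)"
    by (rule is_dist_I[OF fin n0(3), where T="{5,6}"]) (use assms in \<open>auto simp: supp_def D2_def\<close>)
  have tr: "\<forall>(u, a, \<mu>)\<in>trans (N2 p r s t). u \<in> states (N2 p r s t) \<and> a \<in> acts (N2 p r s t) \<and> is_dist (states (N2 p r s t)) \<mu>"
  proof (clarify)
    fix u a \<mu> assume "(u, a, \<mu>) \<in> trans (N2 p r s t)"
    thus "u \<in> states (N2 p r s t) \<and> a \<in> acts (N2 p r s t) \<and> is_dist (states (N2 p r s t)) \<mu>"
      unfolding N2_trans
    proof (elim disjE conjE)
      assume "u = 0" "a = 0" "\<mu> = D0 p r" thus ?thesis using i0 by simp
    next
      assume "p \<noteq> 0" "u = 1" "a = 0" "\<mu> = D1 p r"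
      moreover have "u \<in> states (N2 p r s t)" using calculation by (simp add: supp_D0)
      ultimately show ?thesis using i1 by simp
    next
      assume "r \<noteq> 0" "u = 2" "a = 1" "\<mu> = D2 s t"
      moreover have "u \<in> states (N2 p r s t)" using calculation by (simp add: supp_D0)
      ultimately show ?thesis using i2 by simp
    qed
  qed
  have ftr: "finite (trans (N2 p r s t))" by (simp add: N2_def)
  have wfN: "wf_lpts (N2 p r s t)"
    unfolding wf_lpts_def using fin tr ftr by simp
  show ?thesis
    apply (rule stoch_intro[OF wfN])
    subgoal by (auto simp: N2_trans supp_D0 supp_D1 supp_D2 split: if_splits)
    subgoal by (auto simp: N2_tr supp_D0 supp_D1 supp_D2 split: if_splits)
    subgoal by (auto simp: N2_tr supp_D0 supp_D1 supp_D2 split: if_splits)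
    done
qed

lemma D_vals[simp]: "D0 p r 1 = p" "D0 p r 2 = r" "D1 p r 3 = p" "D1 p r 4 = r" "D2 s t 5 = s" "D2 s t 6 = t"
  by (auto simp: D0_def D1_def D2_def)

lemma suppD_cases: "c \<in> supp (D0 p r) \<Longrightarrow> c = 1 \<or> c = 2" "c \<in> supp (D1 p r) \<Longrightarrow> c = 3 \<or> c = 4"
  "c \<in> supp (D2 s t) \<Longrightarrow> c = 5 \<or> c = 6"
  by (auto simp: supp_D0 supp_D1 supp_D2 split: if_splits)

lemma inj_two: "A \<subseteq> {a, b} \<Longrightarrow> f a \<noteq> f b \<Longrightarrow> inj_on f A"
  unfolding inj_on_def by (metis insert_iff singletonD subsetD)

lemma suppD_sub: "supp (D0 p r) \<subseteq> {1,2}" "supp (D1 p r) \<subseteq> {3,4}" "supp (D2 s t) \<subseteq> {5,6}"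
  by (auto simp: supp_D0 supp_D1 supp_D2 split: if_splits)

lemma N2_exec:
  assumes "(x, 0, \<mu>0) \<in> trans H" "(z, 1, \<nu>) \<in> trans H" "x \<noteq> z" "x \<in> states H" "z \<in> states H"
  shows "exec_mapping (N2 (\<mu>0 x) (\<mu>0 z) (\<nu> x) (\<nu> z)) H (\<lambda>n. if n = 0 \<or> n = 1 \<or> n = 3 \<or> n = 5 then x else z)"
    (is "exec_mapping ?N H ?M")
  unfolding exec_mapping_def
proof (intro conjI ballI)
  fix c assume "c \<in> states ?N" show "?M c \<in> states H" using assms(4,5) by simp
next
  fix tr assume "tr \<in> trans ?N"
  then obtain u a \<mu> where tr: "tr = (u, a, \<mu>)" "(u, a, \<mu>) \<in> trans ?N" by (cases tr) auto
  have "\<exists>\<mu>'. (?M u, a, \<mu>') \<in> trans H \<and> inj_on ?M (supp \<mu>) \<and> (\<forall>c'\<in>supp \<mu>. \<mu> c' = \<mu>' (?M c'))"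
    using tr(2) unfolding N2_trans
  proof (elim disjE conjE)
    assume h: "u = 0" "a = 0" "\<mu> = D0 (\<mu>0 x) (\<mu>0 z)"
    have "inj_on ?M (supp \<mu>)" using h(3) suppD_sub(1) assms(3) by (intro inj_two[of _ 1 2]) auto
    moreover have "\<forall>c'\<in>supp \<mu>. \<mu> c' = \<mu>0 (?M c')"
    proof
      fix c' assume "c' \<in> supp \<mu>" hence "c' = 1 \<or> c' = 2" using h(3) suppD_sub(1) by blast
      thus "\<mu> c' = \<mu>0 (?M c')" using h(3) by (auto simp: D0_def)
    qed
    ultimately show ?thesis using h(1,2) assms(1) by auto
  next
    assume h: "\<mu>0 x \<noteq> 0" "u = 1" "a = 0" "\<mu> = D1 (\<mu>0 x) (\<mu>0 z)"
    have "inj_on ?M (supp \<mu>)" using h(4) suppD_sub(2) assms(3) by (intro inj_two[of _ 3 4]) auto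
    moreover have "\<forall>c'\<in>supp \<mu>. \<mu> c' = \<mu>0 (?M c')"
    proof
      fix c' assume "c' \<in> supp \<mu>" hence "c' = 3 \<or> c' = 4" using h(4) suppD_sub(2) by blast
      thus "\<mu> c' = \<mu>0 (?M c')" using h(4) by (auto simp: D1_def)
    qed
    ultimately show ?thesis using h(2,3) assms(1) by auto
  next
    assume h: "\<mu>0 z \<noteq> 0" "u = 2" "a = 1" "\<mu> = D2 (\<nu> x) (\<nu> z)"
    have "inj_on ?M (supp \<mu>)" using h(4) suppD_sub(3) assms(3) by (intro inj_two[of _ 5 6]) auto
    moreover have "\<forall>c'\<in>supp \<mu>. \<mu> c' = \<nu> (?M c')"
    proof
      fix c' assume "c' \<in> supp \<mu>" hence "c' = 5 \<or> c' = 6" using h(4) suppD_sub(3) by blast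
      thus "\<mu> c' = \<nu> (?M c')" using h(4) by (auto simp: D2_def)
    qed
    ultimately show ?thesis using h(2,3) assms(2) by auto
  qed
  thus "case tr of (c, a, \<mu>c) \<Rightarrow> \<exists>\<mu>. (?M c, a, \<mu>) \<in> trans H \<and> inj_on ?M (supp \<mu>c) \<and> (\<forall>c'\<in>supp \<mu>c. \<mu>c c' = \<mu> (?M c'))"
    using tr(1) by simp
qed



lemma finN2: "finite (states (N2 p r s t))" by (simp add: supp_D0 supp_D1 supp_D2)

lemma N2_in1: "p \<noteq> 0 \<Longrightarrow> 1 \<in> states (N2 p r s t)" by (simp add: supp_D0)
lemma N2_in2: "r \<noteq> 0 \<Longrightarrow> 2 \<in> states (N2 p r s t)" by (simp add: supp_D0)

declare N2_simps(3)[simp del]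

lemma N2_not_le_U:
  assumes "0 \<le> p" "0 \<le> r" "p + r = 1"
  shows "\<not> N2 p r s t \<preceq>\<^sub>s Ut"
proof
  let ?N = "N2 p r s t"
  assume "?N \<preceq>\<^sub>s Ut"
  then obtain R where R: "strong_sim ?N Ut R" "(0, 0) \<in> R" by (auto simp: sim_preceq_def)
  have "(0, 0, D0 p r) \<in> trans ?N" by (simp add: N2_trans)
  from sim_step[OF R this] obtain \<mu> where "(0, 0, \<mu>) \<in> trans Ut" "lift_rel (states ?N) (states Ut) R (D0 p r) \<mu>"
    by blast
  hence "lift_rel (states ?N) {0,1,2,3} R (D0 p r) muA" by (simp add: Ut_trans)
  then obtain w where w: "\<forall>x y. 0 \<le> w x y \<and> w x y \<le> 1"
      "\<forall>x\<in>states ?N. (\<Sum>y\<in>{0,1,2,3}. w x y) = D0 p r x"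
      "\<forall>y\<in>{0,1,2,3}. (\<Sum>x\<in>states ?N. w x y) = muA y"
      "\<forall>x y. w x y > 0 \<longrightarrow> (x, y) \<in> R"
    by (rule lift_relE)
  have "(\<Sum>x\<in>states ?N. w x 0) = 0" using w(3) by (simp add: muA_def)
  hence col0: "n \<in> states ?N \<Longrightarrow> w n 0 = 0" for n
    using finN2 w(1) sum_nonneg_eq_0_iff[of "states ?N" "\<lambda>x. w x 0"] by blast
  have p0: "p = 0"
  proof (rule ccontr)
    assume pn: "p \<noteq> 0"
    hence "(\<Sum>y\<in>{0,1,2,3}. w 1 y) > 0" using w(2) N2_in1[OF pn] assms(1) by (simp add: D0_def)
    then obtain y where y: "y \<in> {0,1,2,3::nat}" "w 1 y > 0" using pos_term[of "{0,1,2,3::nat}" "w 1"] by blast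
    have "(1, y) \<in> R" using y w(4) by blast
    moreover have "(1, 0, D1 p r) \<in> trans ?N" using pn by (simp add: N2_trans)
    ultimately have "y = 0" using sim_act[OF R(1)] by (auto simp: Ut_trans)
    thus False using y col0[OF N2_in1[OF pn]] by simp
  qed
  hence r1: "r = 1" using assms by simp
  have in2: "2 \<in> states ?N" using N2_in2 r1 by simp
  have tr2: "(2, 1, D2 s t) \<in> trans ?N" using r1 by (simp add: N2_trans)
  have z: "w 2 y = 0" if "y \<noteq> 1" for y
  proof (rule ccontr)
    assume "w 2 y \<noteq> 0" hence "w 2 y > 0" using w(1) by (metis less_eq_rat_def)
    hence "(2, y) \<in> R" using w(4) by blast
    hence "y = 1" using sim_act[OF R(1) _ tr2] by (auto simp: Ut_trans)
    thus False using that by simp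
  qed
  have "(\<Sum>y\<in>{0,1,2,3}. w 2 y) = 1" using w(2) in2 r1 by (simp add: D0_def)
  hence "w 2 1 = 1" using z by simp
  moreover have "w 2 1 \<le> (\<Sum>x\<in>states ?N. w x 1)"
    by (rule le_sum[OF finN2]) (use w(1) in2 in auto)
  moreover have "(\<Sum>x\<in>states ?N. w x 1) = 1/2" using w(3) by (simp add: muA_def)
  ultimately show False by simp
qed

lemma N2_le_F:
  assumes "0 \<le> p" "0 \<le> r" "p + r = 1" "N2 p r s t \<preceq>\<^sub>s Fq q"
  shows "q = r"
proof -
  let ?N = "N2 p r s t"
  obtain R where R: "strong_sim ?N (Fq q) R" "(0, 0) \<in> R" using assms(4) by (auto simp: sim_preceq_def)
  have "(0, 0, D0 p r) \<in> trans ?N" by (simp add: N2_trans)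
  from sim_step[OF R this] obtain \<mu> where "(0, 0, \<mu>) \<in> trans (Fq q)" "lift_rel (states ?N) (states (Fq q)) R (D0 p r) \<mu>"
    by blast
  hence "lift_rel (states ?N) {0,1} R (D0 p r) (fq q)" by (simp add: Fq_trans)
  then obtain w where w: "\<forall>x y. 0 \<le> w x y \<and> w x y \<le> 1"
      "\<forall>x\<in>states ?N. (\<Sum>y\<in>{0,1}. w x y) = D0 p r x"
      "\<forall>y\<in>{0,1}. (\<Sum>x\<in>states ?N. w x y) = fq q y"
      "\<forall>x y. w x y > 0 \<longrightarrow> (x, y) \<in> R"
    by (rule lift_relE)
  have rowsum: "n \<in> states ?N \<Longrightarrow> w n 0 + w n 1 = D0 p r n" for n
  proof -
    assume "n \<in> states ?N" hence "(\<Sum>y\<in>{0,1}. w n y) = D0 p r n" using w(2) by blast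
    thus ?thesis by simp
  qed
  have pos: "w n y \<noteq> 0 \<Longrightarrow> (n, y) \<in> R" for n y using w(1,4) by (metis less_eq_rat_def)
  have val: "w n 1 = (if n = 2 then r else 0)" if n: "n \<in> states ?N" for n
  proof (cases "n = 1 \<and> p \<noteq> 0")
    case True
    hence "(1, 0, D1 p r) \<in> trans ?N" by (simp add: N2_trans)
    hence "w 1 1 = 0" using pos[of 1 1] sim_act[OF R(1)] by (fastforce simp: Fq_trans)
    thus ?thesis using True by simp
  next
    case c1: False
    show ?thesis
    proof (cases "n = 2 \<and> r \<noteq> 0")
      case True
      hence "(2, 1, D2 s t) \<in> trans ?N" by (simp add: N2_trans)
      hence "w 2 0 = 0" using pos[of 2 0] sim_act[OF R(1)] by (fastforce simp: Fq_trans)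
      thus ?thesis using True rowsum[OF n] by (simp add: D0_def)
    next
      case False
      hence "D0 p r n = 0" using c1 by (auto simp: D0_def)
      hence "w n 0 + w n 1 = 0" using rowsum[OF n] by simp
      hence "w n 1 = 0" using w(1) by (metis add_nonneg_eq_0_iff)
      thus ?thesis using False assms by auto
    qed
  qed
  have "q = (\<Sum>x\<in>states ?N. w x 1)" using w(3) by (simp add: fq_def)
  also have "\<dots> = (\<Sum>x\<in>states ?N. if x = 2 then r else 0)" using val by (rule sum.cong[OF refl])
  also have "\<dots> = (if 2 \<in> states ?N then r else 0)" using finN2 by simp
  also have "\<dots> = r" using N2_in2 by auto
  finally show ?thesis .
qed



definition Inv :: "nat history \<Rightarrow> bool" where
  "Inv h \<longleftrightarrow> (\<exists>q1 q2. 1/2 \<le> q1 \<and> q1 < q2 \<and> q2 \<le> 1 \<and> (\<forall>q. q1 \<le> q \<and> q \<le> q2 \<longrightarrow> consistent (Fq q) h))"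

lemma consistent_snoc: "consistent L (h @ [(pos, C)]) \<longleftrightarrow> consistent L h \<and> (if pos then C \<preceq>\<^sub>s L else \<not> C \<preceq>\<^sub>s L)"
  by (auto simp: consistent_def)

lemma exec_id: "wf_lpts L \<Longrightarrow> exec_mapping L L id"
  unfolding exec_mapping_def wf_lpts_def by auto

lemma U_le_U: "Ut \<preceq>\<^sub>s Ut"
  using exec_sim[OF wf_Ut wf_Ut exec_id[OF wf_Ut]] by simp

lemma tree_wf: "stochastic_tree C \<Longrightarrow> wf_lpts C" by (simp add: stochastic_tree_def)

lemma two_states: assumes "finite S" "card S \<le> 2" "x \<in> S" "z \<in> S" "x \<noteq> z" shows "S = {x, z}"
proof -
  have "{x, z} \<subseteq> S" using assms by auto
  moreover have "card {x, z} = card S" using assms card_mono[OF assms(1), of "{x,z}"] by auto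
  ultimately show ?thesis using assms(1) by (metis card_subset_eq)
qed

lemma step:
  assumes inv: "Inv h" and wf: "wf_lpts H" and card: "card (states H) \<le> 2"
  shows "\<exists>ans. valid_answer Ut H h ans \<and> Inv (h @ [ans])"
proof -
  obtain q1 q2 where q: "1/2 \<le> q1" "q1 < q2" "q2 \<le> 1" and cons: "\<And>q. q1 \<le> q \<Longrightarrow> q \<le> q2 \<Longrightarrow> consistent (Fq q) h"
    using inv unfolding Inv_def by blast
  have wfF: "wf_lpts (Fq q1)" using q by (intro wf_Fq) auto
  define x where "x = start H"
  have fin: "finite (states H)" and xin: "x \<in> states H" using wf by (auto simp: wf_lpts_def x_def)
  show ?thesis
  proof (cases "Ut \<preceq>\<^sub>s H")
    case False
    have "valid_answer Ut H h (True, Ut)"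
      unfolding valid_answer_def using tree_Ut U_le_U False exec_id[OF wf_Ut] wfF cons[of q1] q U_le_F[of q1]
      by (auto simp: consistent_snoc)
    moreover have "Inv (h @ [(True, Ut)])"
      unfolding Inv_def using q cons U_le_F by (intro exI[of _ q1] exI[of _ q2]) (auto simp: consistent_snoc)
    ultimately show ?thesis by blast
  next
    case UH: True
    show ?thesis
    proof (cases "\<exists>c \<nu>. (x, c, \<nu>) \<in> trans H \<and> c \<noteq> 0")
      case True
      then obtain c \<nu> where t: "(x, c, \<nu>) \<in> trans H" "c \<noteq> 0" by blast
      have tr: "stochastic_tree (N1 c \<nu>)" and ex: "exec_mapping (N1 c \<nu>) H (\<lambda>n. if n = 0 then start H else n - 1)"
        using N1_props[OF wf] t(1) unfolding x_def by auto
      have le: "N1 c \<nu> \<preceq>\<^sub>s H" using exec_sim[OF tree_wf[OF tr] wf ex] by simp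
      have "valid_answer Ut H h (False, N1 c \<nu>)"
        unfolding valid_answer_def using tr le ex N1_not_le_U[OF t(2)] N1_not_le_F[OF t(2)] wfF cons[of q1] q
        by (auto simp: consistent_snoc)
      moreover have "Inv (h @ [(False, N1 c \<nu>)])"
        unfolding Inv_def using q cons N1_not_le_F[OF t(2)]
        by (intro exI[of _ q1] exI[of _ q2]) (auto simp: consistent_snoc)
      ultimately show ?thesis by blast
    next
      case False
      hence only0: "\<And>c \<nu>. (x, c, \<nu>) \<in> trans H \<Longrightarrow> c = 0" by blast
      obtain R where R: "strong_sim Ut H R" "(0, x) \<in> R" using UH by (auto simp: sim_preceq_def x_def)
      have "(0, 0, muA) \<in> trans Ut" by (simp add: Ut_trans)
      from sim_step[OF R this] obtain \<mu>0 where m0: "(x, 0, \<mu>0) \<in> trans H" "lift_rel {0,1,2,3} (states H) R muA \<mu>0"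
        by auto
      then obtain w where w: "\<forall>x y. 0 \<le> w x y \<and> w x y \<le> 1"
          "\<forall>x\<in>{0,1,2,3}. (\<Sum>y\<in>states H. w x y) = muA x"
          "\<forall>y\<in>states H. (\<Sum>x\<in>{0,1,2,3}. w x y) = \<mu>0 y"
          "\<forall>x y. w x y > 0 \<longrightarrow> (x, y) \<in> R"
        by (auto elim: lift_relE)
      have "(\<Sum>y\<in>states H. w 1 y) = 1/2" using w(2) by (simp add: muA_def)
      then obtain z where z: "z \<in> states H" "w 1 z > 0" using pos_term[OF fin, of "w 1"] by auto
      have "(1, z) \<in> R" using z w(4) by blast
      moreover have "(1, 1, dirac 3) \<in> trans Ut" by (simp add: Ut_trans)
      ultimately obtain \<nu> where nu: "(z, 1, \<nu>) \<in> trans H" using sim_act[OF R(1)] by blast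
      have xz: "x \<noteq> z" using only0 nu by force
      have SH: "states H = {x, z}" using two_states[OF fin card xin z(1) xz] .
      have d0: "is_dist (states H) \<mu>0" using wf m0(1) by (auto simp: wf_lpts_def)
      have d1: "is_dist (states H) \<nu>" using wf nu by (auto simp: wf_lpts_def)
      have s0: "\<mu>0 x + \<mu>0 z = 1" using d0 xz unfolding SH is_dist_def by simp
      have s1: "\<nu> x + \<nu> z = 1" using d1 xz unfolding SH is_dist_def by simp
      have nn: "0 \<le> \<mu>0 x" "0 \<le> \<mu>0 z" "0 \<le> \<nu> x" "0 \<le> \<nu> z"
        using dist_nonneg[OF d0] dist_nonneg[OF d1] by auto
      define N where "N = N2 (\<mu>0 x) (\<mu>0 z) (\<nu> x) (\<nu> z)"
      have tr: "stochastic_tree N" unfolding N_def using N2_tree nn s0 s1 by blast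
      have ex: "exec_mapping N H (\<lambda>n. if n = 0 \<or> n = 1 \<or> n = 3 \<or> n = 5 then x else z)"
        unfolding N_def using N2_exec[OF m0(1) nu xz xin z(1)] .
      have le: "N \<preceq>\<^sub>s H" using exec_sim[OF tree_wf[OF tr] wf ex] by (simp add: N_def x_def)
      have nU: "\<not> N \<preceq>\<^sub>s Ut" unfolding N_def using N2_not_le_U nn s0 by blast
      have nF: "q \<noteq> \<mu>0 z \<Longrightarrow> \<not> N \<preceq>\<^sub>s Fq q" for q unfolding N_def using N2_le_F nn s0 by blast
      define m where "m = (q1 + q2) / 2"
      obtain a b where ab: "q1 \<le> a" "a < b" "b \<le> q2" "\<mu>0 z \<notin> {a..b}"
      proof (cases "\<mu>0 z \<le> m")
        case True
        show ?thesis by (rule that[of "(m + q2)/2" q2]) (use True q in \<open>auto simp: m_def field_simps\<close>)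
      next
        case False
        show ?thesis by (rule that[of q1 m]) (use False q in \<open>auto simp: m_def field_simps\<close>)
      qed
      have wfa: "wf_lpts (Fq a)" using q ab by (intro wf_Fq) auto
      have "valid_answer Ut H h (False, N)"
        unfolding valid_answer_def using tr le ex nU wfa cons[of a] nF[of a] q ab
        by (auto simp: consistent_snoc)
      moreover have "Inv (h @ [(False, N)])"
        unfolding Inv_def using q ab cons nF
        by (intro exI[of _ a] exI[of _ b]) (auto simp: consistent_snoc)
      ultimately show ?thesis by blast
    qed
  qed
qed



theorem theorem6:
  shows "\<not> (\<exists>learner :: nat history \<Rightarrow> nat lpts.
             min_state_learner learner \<and>
             (\<forall>U teacher. wf_lpts U \<and> friendly_teacher U learner teacher \<longrightarrow>
                (\<exists>n. learner (hist learner teacher n) \<simeq>\<^sub>s U)))"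
proof
  assume "\<exists>learner :: nat history \<Rightarrow> nat lpts.
             min_state_learner learner \<and>
             (\<forall>U teacher. wf_lpts U \<and> friendly_teacher U learner teacher \<longrightarrow>
                (\<exists>n. learner (hist learner teacher n) \<simeq>\<^sub>s U))"
  then obtain learner :: "nat history \<Rightarrow> nat lpts" where ms: "min_state_learner learner"
    and conv: "\<And>U teacher. wf_lpts U \<Longrightarrow> friendly_teacher U learner teacher \<Longrightarrow>
                (\<exists>n. learner (hist learner teacher n) \<simeq>\<^sub>s U)" by blast
  define teacher where "teacher = (\<lambda>h H. SOME ans. valid_answer Ut H h ans \<and> Inv (h @ [ans]))"
  have small: "wf_lpts (learner h) \<and> card (states (learner h)) \<le> 2" if "Inv h" for h
  proof -
    obtain q1 q2 where q: "1/2 \<le> q1" "q1 < q2" "q2 \<le> 1" and cons: "consistent (Fq q1) h"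
      using \<open>Inv h\<close> unfolding Inv_def by force
    have wfF: "wf_lpts (Fq q1)" using q by (intro wf_Fq) auto
    have "wf_lpts (learner h) \<and> card (states (learner h)) \<le> card (states (Fq q1))"
      using ms wfF cons unfolding min_state_learner_def by blast
    thus ?thesis by (simp add: card_Fq)
  qed
  have good: "valid_answer Ut (learner h) h (teacher h (learner h)) \<and> Inv (h @ [teacher h (learner h)])"
    if "Inv h" for h
  proof -
    have "\<exists>ans. valid_answer Ut (learner h) h ans \<and> Inv (h @ [ans])"
      using step[OF that] small[OF that] by blast
    thus ?thesis unfolding teacher_def by (rule someI_ex)
  qed
  have inv: "Inv (hist learner teacher n)" for n
  proof (induction n)
    case 0
    show ?case unfolding Inv_def consistent_def
      by (intro exI[of _ "1/2"] exI[of _ 1]) simp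
  next
    case (Suc n)
    thus ?case using good by simp
  qed
  have "friendly_teacher Ut learner teacher"
    unfolding friendly_teacher_def using good inv by blast
  then obtain n where eq: "learner (hist learner teacher n) \<simeq>\<^sub>s Ut" using conv wf_Ut by blast
  have "3 \<le> card (states (learner (hist learner teacher n)))"
    using no_small eq small[OF inv] unfolding sim_equiv_def by blast
  thus False using small[OF inv[of n]] by simp
qed


end
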